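(* Let $n\ge3$. For $k\ge0$ let $c_k$ be the number of elements of $K^{\infty}_n$ of length $k$, and for $k\ge1$, $1\le i\le n$, let $c_{k;i}$ be the number of elements of length $k$ whose canonical form begins with $y_i$. Then $c_0=1$, $c_{1;i}=1$ for all $i$, $c_k=\sum_{i=1}^n c_{k;i}$ for $k\ge1$, and for $k\ge2$: $$c_{k;j}=\sum_{i=\max(1,j-1)}^{n} c_{k-1;i}\quad (j\ne n),\qquad c_{k;n}=\sum_{i=n-2}^{n}c_{k-1;i}.$$
   Context: $K^{\infty}_n=\langle y_1,\dots,y_n\mid y_iy_j=y_jy_i\ (j+2\le i\le n-1),\ y_ny_k=y_ky_n\ (1\le k\le n-3)\rangle$. The canonical form of an element is its smallest representative word in length-lexicographic order with $y_1<\cdots<y_n$. *)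

theory Defs
  imports Main
begin

text \<open>Generators y_1..y_n are encoded as natural numbers 1..n; words are lists.
  K^infty_n is the monoid given by the presentation (all relations are commutations).\<close>

definition commutes :: "nat \<Rightarrow> nat \<Rightarrow> nat \<Rightarrow> bool" where
  "commutes n a b \<longleftrightarrow> a \<in> {1..n} \<and> b \<in> {1..n} \<and>
     ((a \<le> n - 1 \<and> b \<le> n - 1 \<and> (a + 2 \<le> b \<or> b + 2 \<le> a))
      \<or> (a = n \<and> b \<le> n - 3) \<or> (b = n \<and> a \<le> n - 3))"

definition swap_step :: "nat \<Rightarrow> nat list \<Rightarrow> nat list \<Rightarrow> bool" where
  "swap_step n u v \<longleftrightarrow> (\<exists>xs ys a b. commutes n a b \<and> u = xs @ [a, b] @ ys \<and> v = xs @ [b, a] @ ys)"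

definition word_eq :: "nat \<Rightarrow> (nat list \<times> nat list) set" where
  "word_eq n = {(u, v). (swap_step n)\<^sup>*\<^sup>* u v}"

definition words_of_len :: "nat \<Rightarrow> nat \<Rightarrow> nat list set" where
  "words_of_len n k = {w. set w \<subseteq> {1..n} \<and> length w = k}"

definition elems_of_len :: "nat \<Rightarrow> nat \<Rightarrow> nat list set set" where
  "elems_of_len n k = words_of_len n k // word_eq n"

definition canon :: "nat list set \<Rightarrow> nat list" where
  "canon C = (THE w. w \<in> C \<and> (\<forall>v \<in> C. v \<noteq> w \<longrightarrow> (w, v) \<in> lenlex less_than))"

definition cnt :: "nat \<Rightarrow> nat \<Rightarrow> nat" where
  "cnt n k = card (elems_of_len n k)"

definition cnt_start :: "nat \<Rightarrow> nat \<Rightarrow> nat \<Rightarrow> nat" where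
  "cnt_start n k i = card {C \<in> elems_of_len n k. canon C \<noteq> [] \<and> hd (canon C) = i}"

end

theory Submission
  imports Defs
begin

definition swp :: "nat \<Rightarrow> 'a list \<Rightarrow> 'a list" where
  "swp i u = u[i := u!Suc i, Suc i := u!i]"

lemma length_swp[simp]: "length (swp i u) = length u"
  by (simp add: swp_def)

lemma nth_swp: "Suc i < length u \<Longrightarrow> k < length u \<Longrightarrow>
   swp i u ! k = (if k = i then u!Suc i else if k = Suc i then u!i else u!k)"
  by (auto simp: swp_def nth_list_update)

lemma swp_swp[simp]: "Suc i < length u \<Longrightarrow> swp i (swp i u) = u"
  by (rule nth_equalityI) (auto simp: nth_swp)

definition Rn :: "nat \<Rightarrow> nat list \<Rightarrow> nat list \<Rightarrow> bool" where
  "Rn n u v \<longleftrightarrow> (\<exists>i. Suc i < length u \<and> u!Suc i < u!i \<and> commutes n (u!i) (u!Suc i) \<and> v = swp i u)"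

definition Sn :: "nat \<Rightarrow> nat list \<Rightarrow> nat list \<Rightarrow> bool" where
  "Sn n u v \<longleftrightarrow> (\<exists>i. Suc i < length u \<and> commutes n (u!i) (u!Suc i) \<and> v = swp i u)"

definition good :: "nat \<Rightarrow> nat list \<Rightarrow> bool" where
  "good n w \<longleftrightarrow> (\<forall>i. Suc i < length w \<longrightarrow> \<not> (w!Suc i < w!i \<and> commutes n (w!i) (w!Suc i)))"

lemma commutes_sym: "commutes n a b \<Longrightarrow> commutes n b a"
  unfolding commutes_def by auto

lemma commutes_irrefl: "\<not> commutes n a a"
  unfolding commutes_def by auto

lemma commutes_chain: "a < b \<Longrightarrow> b < c \<Longrightarrow> commutes n c b \<Longrightarrow> commutes n b a \<Longrightarrow> commutes n c a"
  unfolding commutes_def by auto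

lemma Rn_intro: "Suc i < length u \<Longrightarrow> u!Suc i < u!i \<Longrightarrow> commutes n (u!i) (u!Suc i) \<Longrightarrow> Rn n u (swp i u)"
  unfolding Rn_def by blast

lemma good_iff: "good n w \<longleftrightarrow> \<not> (\<exists>v. Rn n w v)"
  unfolding good_def Rn_def by auto

lemma local_confl:
  assumes "Rn n u v1" "Rn n u v2"
  shows "\<exists>z. (Rn n)\<^sup>*\<^sup>* v1 z \<and> (Rn n)\<^sup>*\<^sup>* v2 z"
proof -
  have main: "\<exists>z. (Rn n)\<^sup>*\<^sup>* (swp i u) z \<and> (Rn n)\<^sup>*\<^sup>* (swp j u) z"
    if ij: "i \<le> j" and hi: "Suc i < length u" "u!Suc i < u!i" "commutes n (u!i) (u!Suc i)"
      and hj: "Suc j < length u" "u!Suc j < u!j" "commutes n (u!j) (u!Suc j)" for u i j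
  proof -
    consider "j = i" | "j = Suc i" | "Suc (Suc i) \<le> j" using ij by linarith
    then show ?thesis
    proof cases
      case 1 then show ?thesis by blast
    next
      case 2
      let ?c = "u!i" and ?b = "u!Suc i" and ?a = "u!Suc (Suc i)"
      have ac: "?a < ?c" using hi hj 2 by simp
      have cac: "commutes n ?c ?a" using commutes_chain[of ?a ?b ?c n] hi hj 2 by simp
      let ?v1 = "swp i u" and ?v2 = "swp (Suc i) u"
      have s1: "Rn n ?v1 (swp (Suc i) ?v1)"
        by (rule Rn_intro) (use hi hj 2 ac cac in \<open>auto simp: nth_swp\<close>)
      have s2: "Rn n (swp (Suc i) ?v1) (swp i (swp (Suc i) ?v1))"
        by (rule Rn_intro) (use hi hj 2 ac cac in \<open>auto simp: nth_swp\<close>)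
      have t1: "Rn n ?v2 (swp i ?v2)"
        by (rule Rn_intro) (use hi hj 2 ac cac in \<open>auto simp: nth_swp\<close>)
      have t2: "Rn n (swp i ?v2) (swp (Suc i) (swp i ?v2))"
        by (rule Rn_intro) (use hi hj 2 ac cac in \<open>auto simp: nth_swp\<close>)
      have eq: "swp i (swp (Suc i) ?v1) = swp (Suc i) (swp i ?v2)"
        by (rule nth_equalityI) (use hi hj 2 in \<open>auto simp: nth_swp\<close>)
      show ?thesis using s1 s2 t1 t2 eq 2
        by (metis r_into_rtranclp rtranclp.rtrancl_into_rtrancl)
    next
      case 3
      have s1: "Rn n (swp i u) (swp j (swp i u))"
        by (rule Rn_intro) (use hi hj 3 in \<open>auto simp: nth_swp\<close>)
      have t1: "Rn n (swp j u) (swp i (swp j u))"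
        by (rule Rn_intro) (use hi hj 3 in \<open>auto simp: nth_swp\<close>)
      have eq: "swp j (swp i u) = swp i (swp j u)"
        by (rule nth_equalityI) (use hi hj 3 in \<open>auto simp: nth_swp\<close>)
      show ?thesis using s1 t1 eq by (metis r_into_rtranclp)
    qed
  qed
  from assms obtain i j where
    hi: "Suc i < length u" "u!Suc i < u!i" "commutes n (u!i) (u!Suc i)" "v1 = swp i u" and
    hj: "Suc j < length u" "u!Suc j < u!j" "commutes n (u!j) (u!Suc j)" "v2 = swp j u"
    unfolding Rn_def by blast
  show ?thesis
  proof (cases "i \<le> j")
    case True then show ?thesis using main[of i j u] hi hj by blast
  next
    case False then show ?thesis using main[of j i u] hi hj by (metis nat_le_linear)
  qed
qed

lemma decomp: "Suc i < length u \<Longrightarrow> u = take i u @ u!i # u!Suc i # drop (Suc (Suc i)) u"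
  by (metis Cons_nth_drop_Suc Suc_lessD append_take_drop_id)

lemma decomp_swp: "Suc i < length u \<Longrightarrow> swp i u = take i u @ u!Suc i # u!i # drop (Suc (Suc i)) u"
proof -
  assume h: "Suc i < length u"
  let ?t = "take i u" and ?d = "drop (Suc (Suc i)) u"
  have "u = ?t @ u!i # u!Suc i # ?d" using decomp[OF h] .
  hence "swp i u = swp i (?t @ u!i # u!Suc i # ?d)" by simp
  also have "\<dots> = ?t @ u!Suc i # u!i # ?d"
    using h by (simp add: swp_def list_update_append nth_append)
  finally show ?thesis .
qed

lemma Rn_lenlex: "Rn n u v \<Longrightarrow> (v, u) \<in> lenlex less_than"
proof -
  assume "Rn n u v"
  then obtain i where h: "Suc i < length u" "u!Suc i < u!i" "v = swp i u" unfolding Rn_def by blast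
  have "(take i u @ u!Suc i # u!i # drop (Suc (Suc i)) u, take i u @ u!i # u!Suc i # drop (Suc (Suc i)) u)
        \<in> lenlex less_than"
    using h(2) by (simp add: irrefl_less_than Cons_lenlex_iff)
  then show ?thesis using decomp[OF h(1)] decomp_swp[OF h(1)] h(3) by metis
qed

lemma wf_Rn: "wf {(v, u). Rn n u v}"
  by (rule wf_subset[OF wf_lenlex[OF wf_less_than]]) (auto dest: Rn_lenlex)

lemma Rn_trancl_lenlex: "(Rn n)\<^sup>+\<^sup>+ u v \<Longrightarrow> (v, u) \<in> lenlex less_than"
proof (induction rule: tranclp_induct)
  case (base y) then show ?case by (rule Rn_lenlex)
next
  case (step y z)
  then show ?case using Rn_lenlex[OF step(2)] lenlex_trans trans_less_than by blast
qed

lemma newman_Rn: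
  "\<forall>y z. (Rn n)\<^sup>*\<^sup>* x y \<longrightarrow> (Rn n)\<^sup>*\<^sup>* x z \<longrightarrow> (\<exists>u. (Rn n)\<^sup>*\<^sup>* y u \<and> (Rn n)\<^sup>*\<^sup>* z u)"
proof (induction x rule: wf_induct[OF wf_Rn[of n]])
  case (1 x)
  show ?case
  proof (intro allI impI)
    fix y z assume xy: "(Rn n)\<^sup>*\<^sup>* x y" and xz: "(Rn n)\<^sup>*\<^sup>* x z"
    show "\<exists>u. (Rn n)\<^sup>*\<^sup>* y u \<and> (Rn n)\<^sup>*\<^sup>* z u"
    proof (cases "x = y")
      case True then show ?thesis using xz by blast
    next
      case False
      then obtain y1 where y1: "Rn n x y1" "(Rn n)\<^sup>*\<^sup>* y1 y" using xy
        by (metis converse_rtranclpE)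
      show ?thesis
      proof (cases "x = z")
        case True then show ?thesis using xy by blast
      next
        case False
        then obtain z1 where z1: "Rn n x z1" "(Rn n)\<^sup>*\<^sup>* z1 z" using xz
          by (metis converse_rtranclpE)
        obtain u1 where u1: "(Rn n)\<^sup>*\<^sup>* y1 u1" "(Rn n)\<^sup>*\<^sup>* z1 u1"
          using local_confl[OF y1(1) z1(1)] by blast
        obtain v where v: "(Rn n)\<^sup>*\<^sup>* y v" "(Rn n)\<^sup>*\<^sup>* u1 v"
          using 1[rule_format, of y1 y u1] y1 u1 by blast
        obtain w where w: "(Rn n)\<^sup>*\<^sup>* z w" "(Rn n)\<^sup>*\<^sup>* v w"
        proof -
          have "(Rn n)\<^sup>*\<^sup>* z1 v" using u1(2) v(2) by (rule rtranclp_trans)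
          moreover have "(z1, x) \<in> {(v, u). Rn n u v}" using z1(1) by simp
          ultimately show ?thesis using 1 z1(2) that by blast
        qed
        show ?thesis using v w by (meson rtranclp_trans)
      qed
    qed
  qed
qed

lemma nf_exists: "\<exists>z. (Rn n)\<^sup>*\<^sup>* x z \<and> good n z"
proof (induction x rule: wf_induct[OF wf_Rn[of n]])
  case (1 x)
  show ?case
  proof (cases "good n x")
    case True then show ?thesis by blast
  next
    case False
    then obtain y where "Rn n x y" by (auto simp: good_iff)
    with 1 obtain z where "(Rn n)\<^sup>*\<^sup>* y z" "good n z" by blast
    then show ?thesis using \<open>Rn n x y\<close> by (meson converse_rtranclp_into_rtranclp)
  qed
qed

lemma good_rtrancl: "good n g \<Longrightarrow> (Rn n)\<^sup>*\<^sup>* g z \<Longrightarrow> z = g"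
  by (metis converse_rtranclpE good_iff)

lemma Sn_Rn: "Sn n u v \<Longrightarrow> Rn n u v \<or> Rn n v u"
proof -
  assume "Sn n u v"
  then obtain i where h: "Suc i < length u" "commutes n (u!i) (u!Suc i)" "v = swp i u"
    unfolding Sn_def by blast
  have ne: "u!i \<noteq> u!Suc i" using h(2) commutes_irrefl by metis
  show ?thesis
  proof (cases "u!Suc i < u!i")
    case True then show ?thesis using h unfolding Rn_def by blast
  next
    case False
    have "Rn n v (swp i v)"
      by (rule Rn_intro) (use h ne False in \<open>auto simp: nth_swp intro: commutes_sym\<close>)
    then show ?thesis using h by simp
  qed
qed

lemma Sn_join: "(Sn n)\<^sup>*\<^sup>* x y \<Longrightarrow> \<exists>z. (Rn n)\<^sup>*\<^sup>* x z \<and> (Rn n)\<^sup>*\<^sup>* y z"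
proof (induction rule: rtranclp_induct)
  case base then show ?case by blast
next
  case (step y w)
  then obtain z where z: "(Rn n)\<^sup>*\<^sup>* x z" "(Rn n)\<^sup>*\<^sup>* y z" by blast
  from Sn_Rn[OF step(2)] show ?case
  proof
    assume "Rn n y w"
    then obtain u where "(Rn n)\<^sup>*\<^sup>* w u" "(Rn n)\<^sup>*\<^sup>* z u"
      using newman_Rn[where x=y] z(2) by blast
    then show ?thesis using z(1) by (meson rtranclp_trans)
  next
    assume "Rn n w y"
    then show ?thesis using z by (meson converse_rtranclp_into_rtranclp)
  qed
qed


lemma swap_step_Sn: "swap_step n = Sn n"
proof (intro ext iffI)
  fix u v assume "swap_step n u v"
  then obtain xs ys a b where h: "commutes n a b" "u = xs @ [a, b] @ ys" "v = xs @ [b, a] @ ys"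
    unfolding swap_step_def by blast
  let ?i = "length xs"
  have "Suc ?i < length u" "u!?i = a" "u!Suc ?i = b" using h by (auto simp: nth_append)
  moreover have "swp ?i u = v" using h by (simp add: swp_def list_update_append nth_append)
  ultimately show "Sn n u v" unfolding Sn_def using h(1) by metis
next
  fix u v assume "Sn n u v"
  then obtain i where h: "Suc i < length u" "commutes n (u!i) (u!Suc i)" "v = swp i u"
    unfolding Sn_def by blast
  show "swap_step n u v" unfolding swap_step_def
    using decomp[OF h(1)] decomp_swp[OF h(1)] h(2,3)
    by (metis append_Cons append_Nil)
qed

lemma Sn_sym: "Sn n u v \<Longrightarrow> Sn n v u"
proof -
  assume "Sn n u v"
  then obtain i where h: "Suc i < length u" "commutes n (u!i) (u!Suc i)" "v = swp i u"
    unfolding Sn_def by blast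
  have "Suc i < length v" "commutes n (v!i) (v!Suc i)" "u = swp i v"
    using h by (auto simp: nth_swp intro: commutes_sym)
  then show ?thesis unfolding Sn_def by blast
qed

lemma Sn_rtrancl_sym: "(Sn n)\<^sup>*\<^sup>* u v \<Longrightarrow> (Sn n)\<^sup>*\<^sup>* v u"
  by (induction rule: rtranclp_induct) (auto intro: converse_rtranclp_into_rtranclp Sn_sym)

lemma Sn_pres: "Sn n u v \<Longrightarrow> set v = set u \<and> length v = length u"
proof -
  assume "Sn n u v"
  then obtain i where h: "Suc i < length u" "v = swp i u" unfolding Sn_def by blast
  have "set (take i u @ u!Suc i # u!i # drop (Suc (Suc i)) u) = set (take i u @ u!i # u!Suc i # drop (Suc (Suc i)) u)"
    by auto
  then have "set v = set u" using decomp[OF h(1)] decomp_swp[OF h(1)] h(2) by metis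
  then show ?thesis using h(2) by simp
qed

lemma Sn_rtrancl_pres: "(Sn n)\<^sup>*\<^sup>* u v \<Longrightarrow> set v = set u \<and> length v = length u"
  by (induction rule: rtranclp_induct) (auto dest: Sn_pres)

lemma Rn_Sn: "Rn n u v \<Longrightarrow> Sn n u v"
  unfolding Rn_def Sn_def by blast

lemma word_eq_Image: "word_eq n `` {x} = {y. (Sn n)\<^sup>*\<^sup>* x y}"
  by (auto simp: word_eq_def swap_step_Sn)

lemma canon_eq:
  assumes gd: "good n g" and xg: "(Sn n)\<^sup>*\<^sup>* x g"
  shows "canon (word_eq n `` {x}) = g"
proof -
  let ?C = "word_eq n `` {x}"
  let ?P = "\<lambda>w. w \<in> ?C \<and> (\<forall>v \<in> ?C. v \<noteq> w \<longrightarrow> (w, v) \<in> lenlex less_than)"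
  have Pg: "?P g"
  proof
    show "g \<in> ?C" using xg by (simp add: word_eq_Image)
    show "\<forall>v \<in> ?C. v \<noteq> g \<longrightarrow> (g, v) \<in> lenlex less_than"
    proof (intro ballI impI)
      fix v assume "v \<in> ?C" "v \<noteq> g"
      then have "(Sn n)\<^sup>*\<^sup>* x v" by (simp add: word_eq_Image)
      then have "(Sn n)\<^sup>*\<^sup>* g v" using Sn_rtrancl_sym[OF xg] by (meson rtranclp_trans)
      then obtain z where "(Rn n)\<^sup>*\<^sup>* g z" "(Rn n)\<^sup>*\<^sup>* v z" using Sn_join by blast
      then have "(Rn n)\<^sup>*\<^sup>* v g" using good_rtrancl[OF gd] by blast
      then have "(Rn n)\<^sup>+\<^sup>+ v g" using \<open>v \<noteq> g\<close> by (meson rtranclpD)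
      then show "(g, v) \<in> lenlex less_than" by (rule Rn_trancl_lenlex)
    qed
  qed
  show ?thesis unfolding canon_def
  proof (rule the_equality)
    show "?P g" by (rule Pg)
    fix w assume Pw: "?P w"
    show "w = g"
    proof (rule ccontr)
      assume "w \<noteq> g"
      then have "(w, g) \<in> lenlex less_than" "(g, w) \<in> lenlex less_than" using Pw Pg by auto
      then have "(w, w) \<in> lenlex less_than" using lenlex_trans trans_less_than by blast
      then show False using lenlex_irreflexive[of less_than w] by auto
    qed
  qed
qed

definition G :: "nat \<Rightarrow> nat \<Rightarrow> nat list set" where
  "G n k = {w \<in> words_of_len n k. good n w}"

lemma class_canon:
  assumes "x \<in> words_of_len n k"
  shows "canon (word_eq n `` {x}) \<in> G n k \<and> (Sn n)\<^sup>*\<^sup>* x (canon (word_eq n `` {x}))"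
proof -
  obtain g where g: "(Rn n)\<^sup>*\<^sup>* x g" "good n g" using nf_exists by blast
  have xg: "(Sn n)\<^sup>*\<^sup>* x g" using g(1) by (rule rtranclp_mono[THEN predicate2D, rotated]) (auto intro: Rn_Sn)
  have "g \<in> words_of_len n k" using assms Sn_rtrancl_pres[OF xg] by (simp add: words_of_len_def)
  then show ?thesis using canon_eq[OF g(2) xg] xg g(2) by (simp add: G_def)
qed

lemma elems_alt: "elems_of_len n k = (\<lambda>x. word_eq n `` {x}) ` words_of_len n k"
  unfolding elems_of_len_def quotient_def by blast

lemma canon_image: "canon ` elems_of_len n k = G n k"
proof
  show "canon ` elems_of_len n k \<subseteq> G n k"
    unfolding elems_alt using class_canon by blast
  show "G n k \<subseteq> canon ` elems_of_len n k"
  proof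
    fix g assume "g \<in> G n k"
    then have "canon (word_eq n `` {g}) = g" "g \<in> words_of_len n k"
      using canon_eq[of n g g] by (auto simp: G_def)
    then show "g \<in> canon ` elems_of_len n k" unfolding elems_alt by (metis image_eqI)
  qed
qed

lemma canon_inj: "inj_on canon (elems_of_len n k)"
proof (rule inj_onI)
  fix C D assume "C \<in> elems_of_len n k" "D \<in> elems_of_len n k" and eq: "canon C = canon D"
  then obtain x y where xy: "x \<in> words_of_len n k" "y \<in> words_of_len n k"
    "C = word_eq n `` {x}" "D = word_eq n `` {y}" unfolding elems_alt by blast
  have xc: "(Sn n)\<^sup>*\<^sup>* x (canon C)" using class_canon[OF xy(1)] xy(3) by simp
  have yc: "(Sn n)\<^sup>*\<^sup>* y (canon C)" using class_canon[OF xy(2)] xy(4) eq by simp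
  have "(Sn n)\<^sup>*\<^sup>* x y" using rtranclp_trans[OF xc Sn_rtrancl_sym[OF yc]] .
  moreover have "(Sn n)\<^sup>*\<^sup>* y x" using rtranclp_trans[OF yc Sn_rtrancl_sym[OF xc]] .
  ultimately have "{z. (Sn n)\<^sup>*\<^sup>* x z} = {z. (Sn n)\<^sup>*\<^sup>* y z}"
  proof (intro set_eqI iffI)
    fix z assume "(Sn n)\<^sup>*\<^sup>* x y" "(Sn n)\<^sup>*\<^sup>* y x"
    { assume "z \<in> {z. (Sn n)\<^sup>*\<^sup>* x z}"
      then show "z \<in> {z. (Sn n)\<^sup>*\<^sup>* y z}" using rtranclp_trans[OF \<open>(Sn n)\<^sup>*\<^sup>* y x\<close>] by simp }
    { assume "z \<in> {z. (Sn n)\<^sup>*\<^sup>* y z}"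
      then show "z \<in> {z. (Sn n)\<^sup>*\<^sup>* x z}" using rtranclp_trans[OF \<open>(Sn n)\<^sup>*\<^sup>* x y\<close>] by simp }
  qed
  then show "C = D" using xy by (simp add: word_eq_Image)
qed


lemma cnt_G: "cnt n k = card (G n k)"
  unfolding cnt_def using card_image[OF canon_inj[of n k]] canon_image[of n k] by simp

lemma cnt_start_G: "cnt_start n k i = card {w \<in> G n k. w \<noteq> [] \<and> hd w = i}"
proof -
  let ?E = "{C \<in> elems_of_len n k. canon C \<noteq> [] \<and> hd (canon C) = i}"
  have im: "canon ` ?E = {w \<in> G n k. w \<noteq> [] \<and> hd w = i}"
  proof
    show "canon ` ?E \<subseteq> {w \<in> G n k. w \<noteq> [] \<and> hd w = i}" 
    proof
      fix w assume "w \<in> canon ` ?E"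
      then obtain C where C: "C \<in> ?E" "w = canon C" by blast
      then have "w \<in> canon ` elems_of_len n k" by blast
      then show "w \<in> {w \<in> G n k. w \<noteq> [] \<and> hd w = i}" using C canon_image[of n k] by simp
    qed
    show "{w \<in> G n k. w \<noteq> [] \<and> hd w = i} \<subseteq> canon ` ?E"
    proof
      fix w assume w: "w \<in> {w \<in> G n k. w \<noteq> [] \<and> hd w = i}"
      then have "w \<in> canon ` elems_of_len n k" using canon_image[of n k] by simp
      then obtain C where "C \<in> elems_of_len n k" "w = canon C" by (rule imageE) simp
      then show "w \<in> canon ` ?E" using w by blast
    qed
  qed
  have inj: "inj_on canon ?E" by (rule inj_on_subset[OF canon_inj]) blast
  show ?thesis unfolding cnt_start_def using card_image[OF inj] im by simp
qed


lemma good_Nil[simp]: "good n []" by (simp add: good_def)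

lemma good_Cons: "good n (j # w) \<longleftrightarrow> good n w \<and> (w = [] \<or> \<not> (hd w < j \<and> commutes n j (hd w)))"
proof (cases w)
  case Nil then show ?thesis by (simp add: good_def)
next
  case (Cons a w')
  have "good n (j # w) \<longleftrightarrow> \<not> (a < j \<and> commutes n j a) \<and> good n w"
  proof
    assume g: "good n (j # w)"
    have "\<not> (a < j \<and> commutes n j a)" using g[unfolded good_def, rule_format, of 0] Cons by simp
    moreover have "good n w" unfolding good_def
    proof (intro allI impI)
      fix i assume "Suc i < length w"
      then show "\<not> (w!Suc i < w!i \<and> commutes n (w!i) (w!Suc i))"
        using g[unfolded good_def, rule_format, of "Suc i"] by simp
    qed
    ultimately show "\<not> (a < j \<and> commutes n j a) \<and> good n w" by simp
  next
    assume h: "\<not> (a < j \<and> commutes n j a) \<and> good n w"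
    show "good n (j # w)" unfolding good_def
    proof (intro allI impI)
      fix i assume i: "Suc i < length (j # w)"
      show "\<not> ((j # w)!Suc i < (j # w)!i \<and> commutes n ((j # w)!i) ((j # w)!Suc i))"
      proof (cases i)
        case 0 then show ?thesis using h Cons by simp
      next
        case (Suc i')
        then show ?thesis using h i unfolding good_def by simp
      qed
    qed
  qed
  then show ?thesis using Cons by auto
qed

definition Gs :: "nat \<Rightarrow> nat \<Rightarrow> nat \<Rightarrow> nat list set" where
  "Gs n k i = {w \<in> G n k. w \<noteq> [] \<and> hd w = i}"

lemma finite_G: "finite (G n k)"
proof -
  have "finite (words_of_len n k)" unfolding words_of_len_def
    by (rule finite_lists_length_eq) simp
  then show ?thesis unfolding G_def by simp
qed

lemma finite_Gs: "finite (Gs n k i)"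
  using finite_G[of n k] unfolding Gs_def by simp

lemma G0: "G n 0 = {[]}"
  by (auto simp: G_def words_of_len_def)

lemma Gs1: "i \<in> {1..n} \<Longrightarrow> Gs n 1 i = {[i]}"
  by (auto simp: Gs_def G_def words_of_len_def good_def length_Suc_conv)

lemma G_union: "k \<ge> 1 \<Longrightarrow> G n k = (\<Union>i\<in>{1..n}. Gs n k i)"
proof
  assume k: "k \<ge> 1"
  show "G n k \<subseteq> (\<Union>i\<in>{1..n}. Gs n k i)"
  proof
    fix w assume w: "w \<in> G n k"
    then have "w \<noteq> []" "set w \<subseteq> {1..n}" using k by (auto simp: G_def words_of_len_def)
    then have "hd w \<in> {1..n}" by (meson hd_in_set subsetD)
    then show "w \<in> (\<Union>i\<in>{1..n}. Gs n k i)" using w \<open>w \<noteq> []\<close> by (auto simp: Gs_def)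
  qed
  show "(\<Union>i\<in>{1..n}. Gs n k i) \<subseteq> G n k" by (auto simp: Gs_def)
qed

lemma card_G: "k \<ge> 1 \<Longrightarrow> card (G n k) = (\<Sum>i = 1..n. card (Gs n k i))"
  unfolding G_union
  by (rule card_UN_disjoint) (use finite_Gs in \<open>auto simp: Gs_def\<close>)

definition A :: "nat \<Rightarrow> nat \<Rightarrow> nat set" where
  "A n j = {i \<in> {1..n}. \<not> (i < j \<and> commutes n j i)}"

lemma Gs_step:
  assumes "k \<ge> 2" "j \<in> {1..n}"
  shows "Gs n k j = (Cons j) ` (\<Union>i\<in>A n j. Gs n (k - 1) i)"
proof
  show "Gs n k j \<subseteq> (Cons j) ` (\<Union>i\<in>A n j. Gs n (k - 1) i)"
  proof
    fix w assume w: "w \<in> Gs n k j"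
    then obtain w' where w': "w = j # w'" by (auto simp: Gs_def neq_Nil_conv)
    have len: "length w' = k - 1" "set w' \<subseteq> {1..n}" "good n (j # w')"
      using w w' by (auto simp: Gs_def G_def words_of_len_def)
    then have "w' \<noteq> []" using assms by auto
    then have "hd w' \<in> {1..n}" using len(2) by (meson hd_in_set subsetD)
    then have "hd w' \<in> A n j" using len(3) \<open>w' \<noteq> []\<close> by (simp add: A_def good_Cons)
    moreover have "w' \<in> Gs n (k - 1) (hd w')"
      using len \<open>w' \<noteq> []\<close> by (simp add: Gs_def G_def words_of_len_def good_Cons)
    ultimately show "w \<in> (Cons j) ` (\<Union>i\<in>A n j. Gs n (k - 1) i)" using w' by blast
  qed
  show "(Cons j) ` (\<Union>i\<in>A n j. Gs n (k - 1) i) \<subseteq> Gs n k j"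
  proof
    fix w assume "w \<in> (Cons j) ` (\<Union>i\<in>A n j. Gs n (k - 1) i)"
    then obtain w' i where h: "w = j # w'" "i \<in> A n j" "w' \<in> Gs n (k - 1) i" by blast
    then have "length w' = k - 1" "set w' \<subseteq> {1..n}" "good n w'" "w' \<noteq> []" "hd w' = i"
      by (auto simp: Gs_def G_def words_of_len_def)
    then show "w \<in> Gs n k j" using h(1,2) assms
      by (auto simp: Gs_def G_def words_of_len_def good_Cons A_def)
  qed
qed

lemma card_Gs_step:
  assumes "k \<ge> 2" "j \<in> {1..n}"
  shows "card (Gs n k j) = (\<Sum>i\<in>A n j. card (Gs n (k - 1) i))"
proof -
  have fA: "finite (A n j)" by (simp add: A_def)
  have "card (Gs n k j) = card (\<Union>i\<in>A n j. Gs n (k - 1) i)"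
    unfolding Gs_step[OF assms] by (rule card_image) simp
  also have "\<dots> = (\<Sum>i\<in>A n j. card (Gs n (k - 1) i))"
    by (rule card_UN_disjoint[OF fA]) (use finite_Gs in \<open>auto simp: Gs_def\<close>)
  finally show ?thesis .
qed

lemma A_lt: "n \<ge> 3 \<Longrightarrow> j \<in> {1..n} \<Longrightarrow> j \<noteq> n \<Longrightarrow> A n j = {max 1 (j - 1)..n}"
  by (auto simp: A_def commutes_def)

lemma A_n: "n \<ge> 3 \<Longrightarrow> A n n = {n - 2..n}"
  by (auto simp: A_def commutes_def)

theorem corollary2:
  fixes n :: nat
  assumes "n \<ge> 3"
  shows "cnt n 0 = 1
    \<and> (\<forall>i \<in> {1..n}. cnt_start n 1 i = 1)
    \<and> (\<forall>k \<ge> 1. cnt n k = (\<Sum>i = 1..n. cnt_start n k i))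
    \<and> (\<forall>k \<ge> 2. \<forall>j \<in> {1..n}. j \<noteq> n \<longrightarrow>
          cnt_start n k j = (\<Sum>i = max 1 (j - 1)..n. cnt_start n (k - 1) i))
    \<and> (\<forall>k \<ge> 2. cnt_start n k n = (\<Sum>i = n - 2..n. cnt_start n (k - 1) i))"
proof -
  have cs: "cnt_start n k i = card (Gs n k i)" for k i
    by (simp add: cnt_start_G Gs_def)
  have nn: "n \<in> {1..n}" using assms by simp
  show ?thesis
    using assms G0 Gs1 card_G card_Gs_step A_lt A_n[OF assms] card_Gs_step[OF _ nn]
    by (simp add: cnt_G cs)
qed

end
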